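(* Let $d\ge 2$, $0<r<1$, $\rho>0$, let $\mu$ be the uniform probability measure on $S^{d-1}\subset\mathbb{R}^d$, and $k(x,y)=\mathbf 1(\|x-y\|\le r)$. Let $e_1,\dots,e_d$ be the standard basis of $\mathbb{R}^d$. For each $i$, let $v_i:S^{d-1}\to[0,1]$ be the unique measurable map with $v_i=1$ on $M^s_i=\{y\in S^{d-1}:\|y-e_i\|\le r\}$ and, for $x\notin M^s_i$, $$v_i(x)=\frac{\int_{M^s_i}k(x,y)d\mu(y)+\int_{S^{d-1}\setminus M^s_i}v_i(y)k(x,y)d\mu(y)}{\rho+\int_{S^{d-1}}k(x,y)d\mu(y)}.$$ Let $r'\in[0,\pi]$ be the angle subtending a chord of length $r$ on the unit circle. Then the map $F:S^{d-1}\to\mathbb{R}^d$, $F(x)=(v_1(x),\dots,v_d(x))$, is $r'\sqrt d$-injective: for all $x,x'\in S^{d-1}$ with $\|x-x'\|>r'\sqrt d$, we have $F(x)\neq F(x')$.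
   Context: A map $f:X\to Z$ between metric spaces is $\epsilon$-injective if $d(x,x')>\epsilon$ implies $f(x)\neq f(x')$; here $S^{d-1}$ carries the Euclidean ($\ell_2$) distance of $\mathbb{R}^d$. *)

theory Defs
  imports "HOL-Analysis.Analysis"
begin

text \<open>Uniform (normalized surface) probability measure on the unit sphere of
  a Euclidean space: the push-forward of the uniform probability measure on the
  open unit ball under radial projection x \<mapsto> x / norm x.\<close>
definition sphere_uniform :: "'a::euclidean_space measure" where
  "sphere_uniform = distr (uniform_measure lborel (ball 0 1)) borel (\<lambda>x. x /\<^sub>R norm x)"

definition ball_kernel :: "real \<Rightarrow> 'a::euclidean_space \<Rightarrow> 'a \<Rightarrow> real" where
  "ball_kernel r x y = (if norm (x - y) \<le> r then 1 else 0)"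

definition chord_angle :: "real \<Rightarrow> real" where
  "chord_angle r = 2 * arcsin (r / 2)"

end

theory Submission
  imports Defs
begin


typedef 'n wo = "UNIV :: 'n set" by simp

instance wo :: (finite) finite
proof
  have "(UNIV :: 'a wo set) = Abs_wo ` UNIV"
    by (metis Rep_wo_inverse surj_def)
  then show "finite (UNIV :: 'a wo set)" by (metis finite finite_imageI)
qed

instantiation wo :: (finite) linorder
begin
definition less_eq_wo :: "'a wo \<Rightarrow> 'a wo \<Rightarrow> bool" where
  "less_eq_wo x y \<longleftrightarrow> to_nat (Rep_wo x) \<le> to_nat (Rep_wo y)"
definition less_wo :: "'a wo \<Rightarrow> 'a wo \<Rightarrow> bool" where
  "less_wo x y \<longleftrightarrow> to_nat (Rep_wo x) < to_nat (Rep_wo y)"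
instance
proof
  fix x y :: "'a wo"
  show "x \<le> y \<Longrightarrow> y \<le> x \<Longrightarrow> x = y"
    unfolding less_eq_wo_def by (metis Rep_wo_inject le_antisym to_nat_split)
qed (auto simp: less_eq_wo_def less_wo_def)
end

instance wo :: (finite) wellorder
proof
  fix P :: "'a wo \<Rightarrow> bool" and a :: "'a wo"
  assume H: "\<And>x. (\<And>y. y < x \<Longrightarrow> P y) \<Longrightarrow> P x"
  have "\<forall>x. to_nat (Rep_wo x) = k \<longrightarrow> P x" for k
  proof (induction k rule: less_induct)
    case (less k)
    show ?case using H less by (auto simp: less_wo_def)
  qed
  then show "P a" by blast
qed

definition Phi :: "real^'n \<Rightarrow> real^('n wo)" where
  "Phi x = (\<chi> j. x $ Rep_wo j)"
definition Phinv :: "real^('n wo) \<Rightarrow> real^'n" where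
  "Phinv y = (\<chi> i. y $ Abs_wo i)"

lemma Phi_Phinv[simp]: "Phi (Phinv y) = y" "Phinv (Phi x) = x"
  by (simp_all add: Phi_def Phinv_def vec_eq_iff Rep_wo_inverse Abs_wo_inverse)

lemma prod_Basis_cart: "(\<Prod>b\<in>(Basis :: (real^'n) set). f b) = (\<Prod>i\<in>UNIV. f (axis i 1))"
  by (simp add: Basis_vec_def axis_eq_axis prod.UNION_disjoint)

lemma ball_Basis_cart: "(\<forall>b\<in>(Basis :: (real^'n) set). P b) \<longleftrightarrow> (\<forall>i. P (axis i 1))"
  by (auto simp: Basis_vec_def)

lemma linear_Phi: "linear Phi"
  by (rule linearI) (simp_all add: Phi_def vec_eq_iff)
lemma linear_Phinv: "linear Phinv"
  by (rule linearI) (simp_all add: Phinv_def vec_eq_iff)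

lemma Phi_measurable[measurable]: "Phi \<in> borel_measurable borel"
  by (intro borel_measurable_continuous_onI linear_continuous_on linear_conv_bounded_linear[THEN iffD1] linear_Phi)
lemma Phinv_measurable[measurable]: "Phinv \<in> borel_measurable borel"
  by (intro borel_measurable_continuous_onI linear_continuous_on linear_conv_bounded_linear[THEN iffD1] linear_Phinv)

lemma Phi_lborel: "distr lborel borel Phi = (lborel :: (real^('n::finite wo)) measure)"
proof (rule lborel_eqI[symmetric])
  fix l u :: "real^('n wo)"
  assume "\<And>b. b \<in> Basis \<Longrightarrow> l \<bullet> b \<le> u \<bullet> b"
  then have le: "l $ j \<le> u $ j" for j
  proof -
    have "l \<bullet> axis j 1 \<le> u \<bullet> axis j 1" by (rule \<open>\<And>b. b \<in> Basis \<Longrightarrow> l \<bullet> b \<le> u \<bullet> b\<close>) simp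
    then show ?thesis by (simp add: inner_axis)
  qed
  have "Phi -` box l u = box (Phinv l) (Phinv u)"
    by (auto simp: mem_box_cart Phi_def Phinv_def) (metis Abs_wo_inverse Rep_wo_inverse UNIV_I)+
  then have "emeasure (distr lborel borel Phi) (box l u) = emeasure lborel (box (Phinv l) (Phinv u))"
    by (simp add: emeasure_distr)
  also have "\<dots> = (\<Prod>i\<in>UNIV. ennreal (u $ Abs_wo i - l $ Abs_wo i))"
    using le by (simp add: emeasure_lborel_box_eq prod_Basis_cart inner_axis Phinv_def ball_Basis_cart prod_ennreal)
  also have "\<dots> = (\<Prod>j\<in>UNIV. ennreal (u $ j - l $ j))"
    by (rule prod.reindex_bij_witness[where i=Rep_wo and j=Abs_wo])
       (auto simp: Rep_wo_inverse Abs_wo_inverse)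
  also have "\<dots> = (\<Prod>b\<in>Basis. ennreal ((u - l) \<bullet> b))"
    by (simp add: prod_Basis_cart inner_axis)
  finally show "emeasure (distr lborel borel Phi) (box l u) = (\<Prod>b\<in>Basis. (u - l) \<bullet> b)"
    using le by (simp add: prod_ennreal inner_axis prod_Basis_cart)
qed simp

lemma inner_Phi: "Phi x \<bullet> Phi y = x \<bullet> y"
  unfolding inner_vec_def Phi_def
  by (simp, rule sum.reindex_bij_witness[where i=Abs_wo and j=Rep_wo])
     (auto simp: Rep_wo_inverse Abs_wo_inverse)

lemma lborel_orth_invariant:
  fixes f :: "real^'n::finite \<Rightarrow> real^'n"
  assumes f: "orthogonal_transformation f" and inv: "\<And>x. f (f x) = x"
    and S: "S \<in> sets borel" "bounded S"
  shows "emeasure lborel (f -` S) = emeasure lborel S"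
proof -
  define g where "g = Phi \<circ> f \<circ> Phinv"
  define T where "T = Phinv -` S"
  have lf: "linear f" using f by (simp add: orthogonal_transformation_linear)
  have g: "orthogonal_transformation g"
    unfolding orthogonal_transformation_def
  proof (intro conjI allI)
    show "linear g" unfolding g_def
      by (intro linear_compose lf linear_Phi linear_Phinv)
    fix v w
    have "g v \<bullet> g w = f (Phinv v) \<bullet> f (Phinv w)" by (simp add: g_def inner_Phi)
    also have "\<dots> = Phinv v \<bullet> Phinv w" using f by (simp add: orthogonal_transformation_def)
    also have "\<dots> = Phi (Phinv v) \<bullet> Phi (Phinv w)" by (simp only: inner_Phi)
    finally show "g v \<bullet> g w = v \<bullet> w" by simp
  qed
  have ginv: "g (g y) = y" for y by (simp add: g_def inv)
  have lg: "linear g" using g by (simp add: orthogonal_transformation_linear)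
  have gm[measurable]: "g \<in> borel_measurable borel"
    by (intro borel_measurable_continuous_onI linear_continuous_on linear_conv_bounded_linear[THEN iffD1] lg)
  have fm[measurable]: "f \<in> borel_measurable borel"
    by (intro borel_measurable_continuous_onI linear_continuous_on linear_conv_bounded_linear[THEN iffD1] lf)
  have T: "T \<in> sets borel" unfolding T_def using measurable_sets_borel[OF Phinv_measurable S(1)] by simp
  have Tb: "bounded T"
  proof -
    have "T = Phi ` S" unfolding T_def by (auto, metis Phi_Phinv(1) imageI)
    then show ?thesis using S(2) linear_Phi
      by (metis bounded_linear_image linear_conv_bounded_linear)
  qed
  have gT: "g -` T = g ` T" using ginv by (auto, metis imageI vimageI2 vimage_eq)
  have Tl: "T \<in> lmeasurable" using T Tb by (intro bounded_set_imp_lmeasurable) auto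
  have gTl: "g ` T \<in> lmeasurable" and mgT: "measure lebesgue (g ` T) = measure lebesgue T"
    using measurable_orthogonal_image[OF g Tl] measure_orthogonal_image[OF g Tl] by auto
  have gTb: "g ` T \<in> sets borel" unfolding gT[symmetric] using measurable_sets_borel[OF gm T] by simp
  have "emeasure lborel (f -` S) = emeasure (distr lborel borel Phi) (Phinv -` (f -` S))"
  proof -
    have "Phi -` (Phinv -` (f -` S)) = f -` S" by auto
    moreover have "Phinv -` (f -` S) \<in> sets borel"
      using measurable_sets_borel[OF Phinv_measurable measurable_sets_borel[OF fm S(1)]] by simp
    ultimately show ?thesis by (simp add: emeasure_distr)
  qed
  also have "Phinv -` (f -` S) = g -` T" by (auto simp: g_def T_def)
  also have "emeasure (distr lborel borel Phi) (g -` T) = emeasure lborel (g ` T)"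
    by (simp add: Phi_lborel gT)
  also have "\<dots> = emeasure lebesgue (g ` T)" using gTb by simp
  also have "\<dots> = emeasure lebesgue T"
    using gTl Tl mgT by (simp add: emeasure_eq_measure2)
  also have "\<dots> = emeasure lborel T" using T by simp
  also have "\<dots> = emeasure (distr lborel borel Phi) T" by (simp add: Phi_lborel)
  also have "\<dots> = emeasure lborel S"
  proof -
    have "Phi -` T = S" by (auto simp: T_def)
    then show ?thesis using T by (simp add: emeasure_distr)
  qed
  finally show ?thesis .
qed



abbreviation "NN \<equiv> (\<lambda>x::'a::euclidean_space. x /\<^sub>R norm x)"
abbreviation "UU \<equiv> (uniform_measure lborel (ball 0 1) :: 'a::euclidean_space measure)"

lemma NN_meas[measurable]: "NN \<in> borel_measurable borel"
proof -
  have "(\<lambda>x::'a. inverse (norm x)) \<in> borel_measurable borel"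
    by (intro borel_measurable_inverse borel_measurable_norm)
  then show ?thesis by (intro borel_measurable_scaleR) (simp_all add: divide_inverse_commute)
qed

lemma sets_su[simp, measurable_cong]: "sets sphere_uniform = sets borel"
  by (simp add: sphere_uniform_def)
lemma space_su[simp]: "space sphere_uniform = UNIV"
  by (simp add: sphere_uniform_def)

lemma ball_pos: "0 < r \<Longrightarrow> emeasure lborel (ball (c::'a::euclidean_space) r) > 0"
proof -
  assume "0 < r"
  then have "0 < measure lborel (ball c r)" using content_ball_pos[of r c] by simp
  then show ?thesis using emeasure_lborel_ball_finite[of c r]
    by (simp add: emeasure_eq_ennreal_measure)
qed

lemma su_UNIV: "emeasure (sphere_uniform :: 'a::euclidean_space measure) UNIV = 1"
proof -
  have "emeasure (sphere_uniform :: 'a measure) UNIV = emeasure (UU :: 'a measure) UNIV"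
    by (simp add: sphere_uniform_def emeasure_distr)
  also have "\<dots> = emeasure lborel (ball (0::'a) 1) / emeasure lborel (ball (0::'a) 1)"
    by simp
  also have "\<dots> = 1"
    using ball_pos[of 1 "0::'a"] emeasure_lborel_ball_finite[of "0::'a" 1]
    by (simp add: divide_eq_1_ennreal)
  finally show ?thesis .
qed

lemma su_finite: "finite_measure (sphere_uniform :: 'a::euclidean_space measure)"
  by (rule finite_measureI) (simp add: su_UNIV)

lemma su_le1: "measure (sphere_uniform :: 'a::euclidean_space measure) A \<le> 1"
proof -
  interpret finite_measure "sphere_uniform :: 'a measure" by (rule su_finite)
  have "measure (sphere_uniform :: 'a measure) A \<le> measure (sphere_uniform :: 'a measure) UNIV"
  proof (cases "A \<in> sets sphere_uniform")
    case True then show ?thesis using finite_measure_mono[of A "space sphere_uniform"] by auto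
  qed (simp add: measure_notin_sets)
  also have "measure (sphere_uniform :: 'a measure) UNIV = 1" using su_UNIV[where 'a='a] by (simp add: measure_def)
  finally show ?thesis .
qed

lemma UU_invariant:
  fixes f :: "real^'n::finite \<Rightarrow> real^'n"
  assumes f: "orthogonal_transformation f" and inv: "\<And>x. f (f x) = x"
  shows "distr (UU :: (real^'n) measure) borel f = UU"
proof (rule measure_eqI)
  have lf: "linear f" using f by (simp add: orthogonal_transformation_linear)
  have fm[measurable]: "f \<in> borel_measurable borel"
    by (intro borel_measurable_continuous_onI linear_continuous_on linear_conv_bounded_linear[THEN iffD1] lf)
  show "sets (distr UU borel f) = sets (UU :: (real^'n) measure)" by simp
  fix A :: "(real^'n) set" assume "A \<in> sets (distr UU borel f)"
  then have A: "A \<in> sets borel" by simp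
  have "f -` (ball 0 1 \<inter> A) = ball 0 1 \<inter> f -` A"
    using f by (auto simp: orthogonal_transformation_norm)
  moreover have "emeasure lborel (f -` (ball 0 1 \<inter> A)) = emeasure lborel (ball 0 1 \<inter> A)"
    by (rule lborel_orth_invariant[OF f inv]) (use A in auto)
  moreover have "f -` A \<in> sets borel" using measurable_sets_borel[OF fm A] by simp
  ultimately show "emeasure (distr UU borel f) A = emeasure UU A"
    using A by (simp add: emeasure_distr)
qed

lemma su_invariant:
  fixes f :: "real^'n::finite \<Rightarrow> real^'n"
  assumes f: "orthogonal_transformation f" and inv: "\<And>x. f (f x) = x"
  shows "distr (sphere_uniform :: (real^'n) measure) borel f = sphere_uniform"
proof -
  have lf: "linear f" using f by (simp add: orthogonal_transformation_linear)
  have fm[measurable]: "f \<in> borel_measurable borel"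
    by (intro borel_measurable_continuous_onI linear_continuous_on linear_conv_bounded_linear[THEN iffD1] lf)
  have comm: "f \<circ> NN = NN \<circ> f"
    using f lf by (auto simp: fun_eq_iff orthogonal_transformation_norm linear_cmul)
  have "distr (sphere_uniform :: (real^'n) measure) borel f = distr (UU :: (real^'n) measure) borel (f \<circ> NN)"
    unfolding sphere_uniform_def by (subst distr_distr) auto
  also have "\<dots> = distr (UU :: (real^'n) measure) borel (NN \<circ> f)" by (simp only: comm)
  also have "\<dots> = distr (distr (UU :: (real^'n) measure) borel f) borel NN"
    by (subst distr_distr) auto
  also have "\<dots> = sphere_uniform" by (simp add: UU_invariant[OF f inv] sphere_uniform_def)
  finally show ?thesis .
qed

lemma su_pos:
  fixes p :: "'a::euclidean_space"
  assumes p: "norm p = 1" and e: "0 < e"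
  shows "emeasure sphere_uniform (sphere 0 1 \<inter> ball p e) > 0"
proof -
  define \<epsilon> where "\<epsilon> = min e 1"
  have \<epsilon>: "0 < \<epsilon>" "\<epsilon> \<le> 1" "\<epsilon> \<le> e" using e by (auto simp: \<epsilon>_def)
  define q where "q = (1 - \<epsilon>/4) *\<^sub>R p"
  have sub: "ball q (\<epsilon>/8) \<subseteq> ball 0 1 \<inter> NN -` (sphere 0 1 \<inter> ball p e)"
  proof
    fix x assume x: "x \<in> ball q (\<epsilon>/8)"
    have nq: "norm q = 1 - \<epsilon>/4" using p \<epsilon> by (simp add: q_def)
    have xq: "norm (x - q) < \<epsilon>/8" using x by (simp add: dist_norm norm_minus_commute)
    have nx1: "norm x < 1" using norm_triangle_ineq[of "x - q" q] nq xq \<epsilon> by simp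
    have nxl: "1 - \<epsilon>/4 - \<epsilon>/8 \<le> norm x" using norm_triangle_ineq[of "q - x" x] nq xq \<epsilon> norm_minus_commute[of q x]
      by simp
    then have nx0: "norm x > 0" using \<epsilon> by linarith
    have qp: "norm (q - p) = \<epsilon>/4" using p \<epsilon>
      by (simp add: q_def algebra_simps)
    have xp: "norm (x - p) < 3*\<epsilon>/8"
      using norm_triangle_ineq[of "x - q" "q - p"] xq qp by simp
    have "\<bar>norm x - 1\<bar> \<le> norm (x - p)" using norm_triangle_ineq3[of x p] p by simp
    have "norm (NN x - x) = \<bar>1 - norm x\<bar>"
    proof -
      have "NN x - x = (1 / norm x - 1) *\<^sub>R x" by (simp add: algebra_simps divide_inverse_commute)
      then have "norm (NN x - x) = \<bar>1 / norm x - 1\<bar> * norm x" by simp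
      also have "\<dots> = \<bar>1 - norm x\<bar>" using nx0 by (simp add: abs_mult_pos' field_simps abs_minus_commute)
      finally show ?thesis .
    qed
    then have "norm (NN x - p) < e"
      using norm_triangle_ineq[of "NN x - x" "x - p"] \<open>\<bar>norm x - 1\<bar> \<le> norm (x - p)\<close> xp \<epsilon>
      by (simp add: abs_minus_commute)
    moreover have "norm (NN x) = 1" using nx0 by simp
    ultimately show "x \<in> ball 0 1 \<inter> NN -` (sphere 0 1 \<inter> ball p e)"
      using nx1 by (simp add: dist_norm norm_minus_commute)
  qed
  have O: "sphere 0 1 \<inter> ball p e \<in> sets borel"
    by (intro sets.Int borel_closed borel_open) auto
  have O2: "NN -` (sphere 0 1 \<inter> ball p e) \<in> sets borel"
    using measurable_sets_borel[OF NN_meas O] by simp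
  have O3: "ball 0 1 \<inter> NN -` (sphere 0 1 \<inter> ball p e) \<in> sets lborel"
    using O2 by auto
  have "0 < emeasure lborel (ball q (\<epsilon>/8))" using ball_pos[of "\<epsilon>/8" q] \<epsilon> by simp
  also have "\<dots> \<le> emeasure lborel (ball 0 1 \<inter> NN -` (sphere 0 1 \<inter> ball p e))"
    by (rule emeasure_mono[OF sub O3])
  finally have pos: "0 < emeasure lborel (ball 0 1 \<inter> NN -` (sphere 0 1 \<inter> ball p e))" .
  have "emeasure sphere_uniform (sphere 0 1 \<inter> ball p e)
      = emeasure (UU :: 'a measure) (NN -` (sphere 0 1 \<inter> ball p e))"
    unfolding sphere_uniform_def using O by (subst emeasure_distr) auto
  also have "\<dots> = emeasure lborel (ball 0 1 \<inter> NN -` (sphere 0 1 \<inter> ball p e)) / emeasure lborel (ball (0::'a) 1)"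
    using O2 by (subst emeasure_uniform_measure) auto
  finally show ?thesis using pos emeasure_lborel_ball_finite[of "0::'a" 1]
    by (simp add: ennreal_zero_less_divide) 
qed



lemma ball_kernel_ind: "ball_kernel r z y = indicator (cball z r) y"
  by (simp add: ball_kernel_def indicator_def dist_norm)

lemma ball_kernel_meas[measurable]: "ball_kernel r z \<in> borel_measurable borel"
  unfolding ball_kernel_ind[abs_def] by (intro borel_measurable_indicator) auto

lemma ball_kernel_01: "0 \<le> ball_kernel r z y" "ball_kernel r z y \<le> 1"
  by (auto simp: ball_kernel_def)

lemma su_intg:
  fixes g :: "'a::euclidean_space \<Rightarrow> real"
  assumes "g \<in> borel_measurable borel" "\<And>y. \<bar>g y\<bar> \<le> B"
  shows "integrable sphere_uniform g"
proof -
  interpret finite_measure "sphere_uniform :: 'a measure" by (rule su_finite)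
  have m: "g \<in> borel_measurable sphere_uniform"
    using assms(1) measurable_cong_sets[OF sets_su refl, of borel] by simp
  show ?thesis
    by (rule integrable_const_bound[where B=B, OF AE_I2 m]) (use assms(2) in simp)
qed

lemma S_borel[measurable]: "sphere (0::'a::euclidean_space) 1 \<in> sets borel"
  by (intro borel_closed) auto

lemma arith_aux:
  fixes \<rho> K v :: real
  assumes "\<rho> > 0" "0 \<le> K" "K \<le> 1" "(\<rho> + K) * v \<le> K"
  shows "v \<le> 1/(1+\<rho>)"
proof -
  have p: "\<rho> + K > 0" using assms by linarith
  have "v \<le> K / (\<rho> + K)" using assms(4) p by (simp add: pos_le_divide_eq mult.commute)
  also have "K / (\<rho> + K) \<le> 1 / (1 + \<rho>)"
  proof -
    have "K * \<rho> \<le> 1 * \<rho>" using assms by (intro mult_right_mono) auto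
    then have "K * (1 + \<rho>) \<le> 1 * (\<rho> + K)" by (simp add: algebra_simps)
    then show ?thesis using p assms(1) by (simp add: frac_le_eq divide_le_eq le_divide_eq)
  qed
  finally show ?thesis .
qed

lemma arith2:
  fixes \<rho> K u m :: real
  assumes "\<rho> > 0" "0 \<le> K" "K \<le> 1" "m < 0" "m * K \<le> (\<rho> + K) * u"
  shows "m/(1+\<rho>) \<le> u"
proof -
  have p: "\<rho> + K > 0" using assms by linarith
  have "m * K / (\<rho> + K) \<le> u" using assms(5) p by (simp add: divide_le_eq mult.commute)
  moreover have "m / (1 + \<rho>) \<le> m * K / (\<rho> + K)"
  proof -
    have "(- m) * (K * \<rho>) \<le> (- m) * (1 * \<rho>)" using assms by (intro mult_left_mono mult_right_mono) auto
    then have "m * (\<rho> + K) \<le> m * K * (1 + \<rho>)" by (simp add: algebra_simps)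
    then show ?thesis using p assms(1) by (simp add: frac_le_eq divide_le_eq le_divide_eq)
  qed
  ultimately show ?thesis by linarith
qed

lemma push_point:
  fixes y e n :: "'a::real_inner"
  assumes y: "norm y = 1" and e: "norm e = 1" and n: "norm n = 1" and r: "0 < r" "r < 1"
    and yn: "r/2 < y \<bullet> n" and en: "r/2 < e \<bullet> n" and ye: "r < norm (y - e)"
  defines "t \<equiv> r/4"
  defines "N \<equiv> norm (y + t *\<^sub>R e)"
  defines "p \<equiv> (1/N) *\<^sub>R (y + t *\<^sub>R e)"
  shows "norm p = 1" "r/2 < p \<bullet> n" "y \<bullet> e + t*r\<^sup>2/(2*(1+t)) \<le> p \<bullet> e" "norm (p - y) \<le> r/2"
proof -
  have t: "0 < t" "t < 1/4" using r by (auto simp: t_def)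
  have Nle: "N \<le> 1 + t" unfolding N_def using norm_triangle_ineq[of y "t *\<^sub>R e"] y e t by simp
  have Nge: "1 - t \<le> N" unfolding N_def using norm_diff_ineq[of y "t *\<^sub>R e"] y e t
    by simp
  have N0: "0 < N" using Nge t by linarith
  show "norm p = 1" unfolding p_def using N0 by (simp add: N_def)
  have ee: "e \<bullet> e = 1" using e by (simp add: dot_square_norm)
  have yy: "y \<bullet> y = 1" using y by (simp add: dot_square_norm)
  have "r/2 * N \<le> r/2 * (1 + t)" using Nle r by simp
  also have "\<dots> < y \<bullet> n + t * (e \<bullet> n)"
  proof -
    have h: "t * (r/2) < t * (e \<bullet> n)" using en t by (intro mult_strict_left_mono) auto
    have "r/2 * (1 + t) = r/2 + t * (r/2)" by (simp add: algebra_simps)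
    then show ?thesis using h yn by linarith
  qed
  finally have "r/2 * N < (y + t *\<^sub>R e) \<bullet> n" by (simp add: inner_add_left)
  then show "r/2 < p \<bullet> n" using N0 by (simp add: p_def pos_less_divide_eq mult.commute)
  define c where "c = y \<bullet> e"
  have pe: "p \<bullet> e = (c + t) / N" using ee by (simp add: p_def inner_add_left c_def)
  have num: "t * r\<^sup>2 / 2 \<le> c + t - c * N"
  proof (cases "0 \<le> c")
    case True
    have "(norm (y - e))\<^sup>2 = 2 - 2 * c"
      by (simp add: power2_norm_eq_inner inner_diff_left inner_diff_right yy ee c_def inner_commute)
    moreover have "r\<^sup>2 < (norm (y - e))\<^sup>2" using ye r by (simp add: power_strict_mono)
    ultimately have "r\<^sup>2 / 2 < 1 - c" by simp
    then have h1: "t * (r\<^sup>2 / 2) \<le> t * (1 - c)" using t by (intro mult_left_mono) auto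
    have h2: "c * N \<le> c * (1 + t)" using True Nle by (simp add: mult_left_mono)
    have q: "c * (1 + t) = c + t * c" "t * (1 - c) = t - t * c" by (simp_all add: algebra_simps)
    show ?thesis using h1 h2 q by linarith
  next
    case False
    have "(norm (y + e))\<^sup>2 = 2 + 2 * c"
      by (simp add: power2_norm_eq_inner inner_add_left inner_add_right yy ee c_def inner_commute)
    moreover have "r < norm (y + e)"
    proof -
      have "(y + e) \<bullet> n \<le> norm (y + e) * norm n" by (rule norm_cauchy_schwarz)
      then show ?thesis using yn en n by (simp add: inner_add_left)
    qed
    then have "r\<^sup>2 < (norm (y + e))\<^sup>2" using r by (simp add: power_strict_mono)
    ultimately have "r\<^sup>2 / 2 < 1 + c" by simp
    then have h1: "t * (r\<^sup>2 / 2) \<le> t * (1 + c)" using t by (intro mult_left_mono) auto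
    have h2: "c * N \<le> c * (1 - t)" using False Nge by (simp add: mult_left_mono_neg)
    have q: "c * (1 - t) = c - t * c" "t * (1 + c) = t + t * c" by (simp_all add: algebra_simps)
    show ?thesis using h1 h2 q by linarith
  qed
  have "t*r\<^sup>2/(2*(1+t)) \<le> (t * r\<^sup>2 / 2) / N"
  proof -
    have "t*r\<^sup>2/(2*(1+t)) \<le> t*r\<^sup>2/(2*N)"
      using N0 Nle t r by (intro divide_left_mono) auto
    then show ?thesis by simp
  qed
  also have "\<dots> \<le> (c + t - c * N) / N" by (rule divide_right_mono[OF num]) (use N0 in simp)
  also have "\<dots> = p \<bullet> e - c" using N0 pe by (simp add: field_simps)
  finally show "y \<bullet> e + t*r\<^sup>2/(2*(1+t)) \<le> p \<bullet> e" by (simp add: c_def)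
  have "p - (y + t *\<^sub>R e) = (1/N - 1) *\<^sub>R (y + t *\<^sub>R e)" by (simp add: p_def algebra_simps)
  then have "norm (p - (y + t *\<^sub>R e)) = \<bar>1/N - 1\<bar> * N" by (simp add: N_def)
  also have "\<dots> = \<bar>1 - N\<bar>" using N0 by (simp add: abs_mult_pos' field_simps abs_minus_commute)
  also have "\<dots> \<le> t" using Nle Nge by simp
  finally have "norm (p - (y + t *\<^sub>R e)) \<le> t" .
  then have "norm (p - y) \<le> t + t"
    using norm_triangle_ineq[of "p - (y + t *\<^sub>R e)" "t *\<^sub>R e"] e t by (simp add: algebra_simps)
  then show "norm (p - y) \<le> r/2" by (simp add: t_def)
qed

locale rsys =
  fixes r \<rho> :: real and v :: "real^'n::finite \<Rightarrow> real" and e n :: "real^'n"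
  assumes r: "0 < r" and r1: "r < 1" and rho: "0 < \<rho>"
    and meas: "v \<in> borel_measurable (sphere_uniform :: (real^'n) measure)"
    and range: "\<And>x. x \<in> sphere 0 1 \<Longrightarrow> v x \<in> {0..1}"
    and on_M: "\<And>x. x \<in> sphere 0 1 \<Longrightarrow> norm (x - e) \<le> r \<Longrightarrow> v x = 1"
    and off_M: "\<And>x. x \<in> sphere 0 1 \<Longrightarrow> \<not> norm (x - e) \<le> r \<Longrightarrow>
        v x =
          ((LINT y:{y \<in> sphere 0 1. norm (y - e) \<le> r}|sphere_uniform. ball_kernel r x y)
           + (LINT y:(sphere 0 1 - {y \<in> sphere 0 1. norm (y - e) \<le> r})|sphere_uniform.
                 v y * ball_kernel r x y))
          / (\<rho> + (LINT y:sphere 0 1|sphere_uniform. ball_kernel r x y))"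
    and e: "norm e = 1" and n: "norm n = 1" and a: "e \<bullet> n > r/2"
begin

abbreviation "S \<equiv> sphere (0::real^'n) 1"
abbreviation "\<mu> \<equiv> (sphere_uniform :: (real^'n) measure)"
abbreviation "k \<equiv> ball_kernel r"
definition "\<sigma> z = z - (2 * (z \<bullet> n)) *\<^sub>R n"
definition "KK z = integral\<^sup>L \<mu> (\<lambda>y. indicator S y * k z y)"
definition "u y = v y - v (\<sigma> y)"

lemma vm[measurable]: "v \<in> borel_measurable borel"
  using meas measurable_cong_sets[OF sets_su refl, of borel] by simp

lemma v01: "y \<in> S \<Longrightarrow> 0 \<le> v y" "y \<in> S \<Longrightarrow> v y \<le> 1"
  using range by auto

lemma abs_v: "y \<in> S \<Longrightarrow> \<bar>v y\<bar> \<le> 1"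
  using range[of y] by auto

lemma nn: "n \<bullet> n = 1" using n by (simp add: dot_square_norm)

lemma \<sigma>_n[simp]: "\<sigma> z \<bullet> n = - (z \<bullet> n)"
  by (simp add: \<sigma>_def inner_diff_left nn)

lemma \<sigma>\<sigma>[simp]: "\<sigma> (\<sigma> z) = z"
proof -
  have "\<sigma> (\<sigma> z) = \<sigma> z - (2 * (\<sigma> z \<bullet> n)) *\<^sub>R n" by (rule \<sigma>_def)
  also have "\<dots> = z" by (simp add: \<sigma>_def inner_diff_left nn)
  finally show ?thesis .
qed

lemma lin\<sigma>: "linear \<sigma>"
  unfolding \<sigma>_def by (rule linearI) (simp_all add: algebra_simps inner_add_left)

lemma \<sigma>_inner: "\<sigma> x \<bullet> \<sigma> y = x \<bullet> y"
  by (simp add: \<sigma>_def inner_diff_left inner_diff_right nn algebra_simps inner_commute)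

lemma orth\<sigma>: "orthogonal_transformation \<sigma>"
  by (simp add: orthogonal_transformation_def lin\<sigma> \<sigma>_inner)

lemma norm\<sigma>[simp]: "norm (\<sigma> z) = norm z"
  using orth\<sigma> orthogonal_transformation_norm by blast

lemma \<sigma>S: "\<sigma> z \<in> S \<longleftrightarrow> z \<in> S" by simp

lemma \<sigma>_diff: "\<sigma> z - \<sigma> y = \<sigma> (z - y)"
  using lin\<sigma> by (simp add: linear_diff)

lemma norm_\<sigma>_diff: "norm (\<sigma> z - \<sigma> y) = norm (z - y)"
  by (simp add: \<sigma>_diff)

lemma \<sigma>_fix: "z \<bullet> n = 0 \<Longrightarrow> \<sigma> z = z"
  by (simp add: \<sigma>_def)

lemma norm_refl_sq: "(norm (z - \<sigma> y))\<^sup>2 = (norm (z - y))\<^sup>2 + 4 * (z \<bullet> n) * (y \<bullet> n)"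
  by (simp add: \<sigma>_def power2_norm_eq_inner inner_diff_left inner_diff_right inner_add_left inner_add_right nn algebra_simps inner_commute)

lemma norm_refl_sq': "(norm (\<sigma> z - y))\<^sup>2 = (norm (z - y))\<^sup>2 + 4 * (z \<bullet> n) * (y \<bullet> n)"
  using norm_refl_sq[of y z] by (simp add: norm_minus_commute mult.commute mult.left_commute)

lemma \<sigma>m[measurable]: "\<sigma> \<in> borel_measurable borel"
  by (intro borel_measurable_continuous_onI linear_continuous_on linear_conv_bounded_linear[THEN iffD1] lin\<sigma>)

lemma int_\<sigma>:
  fixes g :: "real^'n \<Rightarrow> real"
  assumes "g \<in> borel_measurable borel"
  shows "integral\<^sup>L \<mu> g = integral\<^sup>L \<mu> (\<lambda>y. g (\<sigma> y))"
proof -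
  have eq: "distr \<mu> borel \<sigma> = \<mu>" by (rule su_invariant[OF orth\<sigma> \<sigma>\<sigma>])
  have "integral\<^sup>L \<mu> g = integral\<^sup>L (distr \<mu> borel \<sigma>) g"
    by (simp only: eq)
  also have "\<dots> = integral\<^sup>L \<mu> (\<lambda>y. g (\<sigma> y))"
    by (rule integral_distr) (use assms measurable_cong_sets[OF sets_su refl, of borel] in simp_all)
  finally show ?thesis .
qed

lemma intg:
  assumes "g \<in> borel_measurable borel" "\<And>y. \<bar>g y\<bar> \<le> (B::real)"
  shows "integrable \<mu> g"
  using su_intg[OF assms] .

lemma intg_Sk: "integrable \<mu> (\<lambda>y. indicator S y * k z y)"
  by (rule intg[where B=1]) (auto simp: indicator_def ball_kernel_def)

lemma intg_Svk: "integrable \<mu> (\<lambda>y. indicator S y * v y * k z y)"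
proof (rule intg[where B=1])
  show "(\<lambda>y. indicator S y * v y * k z y) \<in> borel_measurable borel" by measurable
  fix y show "\<bar>indicator S y * v y * k z y\<bar> \<le> 1"
    using abs_v[of y] by (auto simp: indicator_def ball_kernel_def)
qed

lemma KK_nonneg: "0 \<le> KK z"
  unfolding KK_def by (rule Bochner_Integration.integral_nonneg) (auto simp: ball_kernel_01)

lemma KK_le1: "KK z \<le> 1"
proof -
  have "KK z \<le> integral\<^sup>L \<mu> (\<lambda>y. 1)"
    unfolding KK_def
    by (rule integral_mono)
       (auto intro!: intg[where B=1] simp: ball_kernel_01 indicator_def ball_kernel_def)
  also have "\<dots> \<le> 1" using su_le1 by simp
  finally show ?thesis .
qed

lemma eq1:
  assumes z: "z \<in> S" "\<not> norm (z - e) \<le> r"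
  shows "(\<rho> + KK z) * v z = integral\<^sup>L \<mu> (\<lambda>y. indicator S y * v y * k z y)"
proof -
  define M where "M = {y \<in> S. norm (y - e) \<le> r}"
  have Mb[measurable]: "M \<in> sets borel"
  proof -
    have "M = S \<inter> cball e r" by (auto simp: M_def dist_norm norm_minus_commute)
    then show ?thesis by (simp add: borel_closed sets.Int)
  qed
  have i1: "integrable \<mu> (\<lambda>y. indicator M y *\<^sub>R k z y)"
    by (rule intg[where B=1]) (auto simp: indicator_def ball_kernel_def)
  have i2: "integrable \<mu> (\<lambda>y. indicator (S - M) y *\<^sub>R (v y * k z y))"
    by (rule intg[where B=1]) (auto simp: indicator_def ball_kernel_def M_def abs_v)
  have pos: "0 < \<rho> + KK z" using rho KK_nonneg[of z] by simp
  have "v z = (integral\<^sup>L \<mu> (\<lambda>y. indicator M y *\<^sub>R k z y)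
      + integral\<^sup>L \<mu> (\<lambda>y. indicator (S - M) y *\<^sub>R (v y * k z y))) / (\<rho> + KK z)"
    using off_M[OF z] by (simp add: set_lebesgue_integral_def M_def KK_def)
  also have "integral\<^sup>L \<mu> (\<lambda>y. indicator M y *\<^sub>R k z y)
      + integral\<^sup>L \<mu> (\<lambda>y. indicator (S - M) y *\<^sub>R (v y * k z y))
      = integral\<^sup>L \<mu> (\<lambda>y. indicator S y * v y * k z y)"
    unfolding Bochner_Integration.integral_add[OF i1 i2, symmetric]
    by (rule Bochner_Integration.integral_cong) (auto simp: indicator_def M_def on_M)
  finally show ?thesis using pos by (simp add: field_simps)
qed

lemma v_small:
  assumes z: "z \<in> S" "\<not> norm (z - e) \<le> r"
  shows "v z \<le> 1 / (1 + \<rho>)"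
proof -
  have "(\<rho> + KK z) * v z = integral\<^sup>L \<mu> (\<lambda>y. indicator S y * v y * k z y)" by (rule eq1[OF z])
  also have "\<dots> \<le> KK z"
    unfolding KK_def
    by (rule integral_mono[OF intg_Svk intg_Sk])
       (auto simp: indicator_def ball_kernel_def v01)
  finally have "(\<rho> + KK z) * v z \<le> KK z" .
  then show ?thesis using arith_aux[of \<rho> "KK z" "v z"] rho KK_nonneg[of z] KK_le1[of z] by simp
qed

lemma u_meas[measurable]: "u \<in> borel_measurable borel"
  unfolding u_def[abs_def] by measurable

lemma abs_u: "y \<in> S \<Longrightarrow> \<bar>u y\<bar> \<le> 1"
  using v01[of y] v01[of "\<sigma> y"] by (auto simp: u_def)

lemma u_\<sigma>: "u (\<sigma> y) = - u y"
  by (simp add: u_def)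

lemma u_fix: "y \<bullet> n = 0 \<Longrightarrow> u y = 0"
  by (simp add: u_def \<sigma>_fix)

lemma k_\<sigma>\<sigma>: "k (\<sigma> z) (\<sigma> y) = k z y"
  by (simp add: ball_kernel_def norm_\<sigma>_diff)

lemma k_\<sigma>1: "k (\<sigma> z) y = k z (\<sigma> y)"
  using k_\<sigma>\<sigma>[of z "\<sigma> y"] by simp

lemma ind_S_\<sigma>: "indicator S (\<sigma> y) = (indicator S y :: real)"
  by (simp add: indicator_def)

lemma k_refl_le:
  assumes "0 \<le> z \<bullet> n" "0 \<le> y \<bullet> n"
  shows "k z (\<sigma> y) \<le> k z y"
proof -
  have "(norm (z - y))\<^sup>2 \<le> (norm (z - \<sigma> y))\<^sup>2"
    using norm_refl_sq[of z y] assms by simp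
  then have "norm (z - y) \<le> norm (z - \<sigma> y)" by (rule power2_le_imp_le) simp
  then show ?thesis by (auto simp: ball_kernel_def)
qed

lemma KK_\<sigma>: "KK (\<sigma> z) = KK z"
proof -
  have "KK (\<sigma> z) = integral\<^sup>L \<mu> (\<lambda>y. indicator S (\<sigma> y) * k (\<sigma> z) (\<sigma> y))"
    unfolding KK_def by (rule int_\<sigma>) measurable
  also have "\<dots> = KK z" unfolding KK_def by (simp only: ind_S_\<sigma> k_\<sigma>\<sigma>)
  finally show ?thesis .
qed

lemma intg_Sv\<sigma>k: "integrable \<mu> (\<lambda>y. indicator S y * v (\<sigma> y) * k z y)"
proof (rule intg[where B=1])
  show "(\<lambda>y. indicator S y * v (\<sigma> y) * k z y) \<in> borel_measurable borel" by measurable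
  fix y show "\<bar>indicator S y * v (\<sigma> y) * k z y\<bar> \<le> 1"
    using abs_v[of "\<sigma> y"] by (auto simp: indicator_def ball_kernel_def)
qed

lemma int_v_\<sigma>: "integral\<^sup>L \<mu> (\<lambda>y. indicator S y * v y * k (\<sigma> z) y)
   = integral\<^sup>L \<mu> (\<lambda>y. indicator S y * v (\<sigma> y) * k z y)"
proof -
  have "integral\<^sup>L \<mu> (\<lambda>y. indicator S y * v y * k (\<sigma> z) y)
     = integral\<^sup>L \<mu> (\<lambda>y. indicator S (\<sigma> y) * v (\<sigma> y) * k (\<sigma> z) (\<sigma> y))"
    by (rule int_\<sigma>) measurable
  also have "\<dots> = integral\<^sup>L \<mu> (\<lambda>y. indicator S y * v (\<sigma> y) * k z y)"
    by (simp only: ind_S_\<sigma> k_\<sigma>\<sigma>)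
  finally show ?thesis .
qed

lemma eq_u:
  assumes z: "z \<in> S" "\<not> norm (z - e) \<le> r" "\<not> norm (\<sigma> z - e) \<le> r"
  shows "(\<rho> + KK z) * u z = integral\<^sup>L \<mu> (\<lambda>y. indicator S y * u y * k z y)"
proof -
  have z': "\<sigma> z \<in> S" using z by simp
  have 1: "(\<rho> + KK z) * v z = integral\<^sup>L \<mu> (\<lambda>y. indicator S y * v y * k z y)"
    by (rule eq1[OF z(1,2)])
  have 2: "(\<rho> + KK z) * v (\<sigma> z) = integral\<^sup>L \<mu> (\<lambda>y. indicator S y * v (\<sigma> y) * k z y)"
    using eq1[OF z' z(3)] by (simp add: KK_\<sigma> int_v_\<sigma>)
  have "(\<rho> + KK z) * u z = integral\<^sup>L \<mu> (\<lambda>y. indicator S y * v y * k z y)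
      - integral\<^sup>L \<mu> (\<lambda>y. indicator S y * v (\<sigma> y) * k z y)"
    using 1 2 by (simp add: u_def right_diff_distrib)
  also have "\<dots> = integral\<^sup>L \<mu> (\<lambda>y. indicator S y * v y * k z y - indicator S y * v (\<sigma> y) * k z y)"
    by (rule Bochner_Integration.integral_diff[OF intg_Svk intg_Sv\<sigma>k, symmetric])
  also have "\<dots> = integral\<^sup>L \<mu> (\<lambda>y. indicator S y * u y * k z y)"
    by (rule Bochner_Integration.integral_cong) (auto simp: u_def algebra_simps)
  finally show ?thesis .
qed

definition "G z y = indicator S y * of_bool (0 < y \<bullet> n) * u y * (k z y - k z (\<sigma> y))"

lemma G_meas[measurable]: "G z \<in> borel_measurable borel"
  unfolding G_def[abs_def] by measurable

lemma intg_G: "integrable \<mu> (G z)"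
proof (rule intg[where B=1])
  fix y show "\<bar>G z y\<bar> \<le> 1"
    using abs_u[of y] by (auto simp: G_def indicator_def ball_kernel_def)
qed simp

lemma split_G: "integral\<^sup>L \<mu> (\<lambda>y. indicator S y * u y * k z y) = integral\<^sup>L \<mu> (G z)"
proof -
  define A where "A y = indicator S y * of_bool (0 < y \<bullet> n) * u y * k z y" for y
  define B where "B y = indicator S y * of_bool (y \<bullet> n < 0) * u y * k z y" for y
  have Am[measurable]: "A \<in> borel_measurable borel" unfolding A_def[abs_def] by measurable
  have Bm[measurable]: "B \<in> borel_measurable borel" unfolding B_def[abs_def] by measurable
  have iA: "integrable \<mu> A"
    by (rule intg[where B=1]) (use abs_u in \<open>auto simp: A_def indicator_def ball_kernel_def\<close>)
  have iB: "integrable \<mu> B"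
    by (rule intg[where B=1]) (use abs_u in \<open>auto simp: B_def indicator_def ball_kernel_def\<close>)
  define C where "C y = - (indicator S y * of_bool (0 < y \<bullet> n) * u y * k z (\<sigma> y))" for y
  have iC: "integrable \<mu> C"
    by (rule intg[where B=1]) (use abs_u in \<open>auto simp: C_def indicator_def ball_kernel_def\<close>, simp add: C_def[abs_def])
  have "integral\<^sup>L \<mu> (\<lambda>y. indicator S y * u y * k z y) = integral\<^sup>L \<mu> (\<lambda>y. A y + B y)"
  proof (rule Bochner_Integration.integral_cong)
    fix y
    show "indicator S y * u y * k z y = A y + B y"
    proof (cases "y \<bullet> n = 0")
      case True then show ?thesis by (simp add: A_def B_def u_fix)
    next
      case False then show ?thesis by (cases "0 < y \<bullet> n") (auto simp: A_def B_def)
    qed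
  qed simp
  also have "\<dots> = integral\<^sup>L \<mu> A + integral\<^sup>L \<mu> B" by (rule Bochner_Integration.integral_add[OF iA iB])
  also have "integral\<^sup>L \<mu> B = integral\<^sup>L \<mu> (\<lambda>y. B (\<sigma> y))" by (rule int_\<sigma>) simp
  also have "\<dots> = integral\<^sup>L \<mu> C"
    by (rule Bochner_Integration.integral_cong) (auto simp: B_def C_def ind_S_\<sigma> u_\<sigma> indicator_def)
  also have "integral\<^sup>L \<mu> A + integral\<^sup>L \<mu> C = integral\<^sup>L \<mu> (\<lambda>y. A y + C y)"
    by (rule Bochner_Integration.integral_add[OF iA iC, symmetric])
  also have "\<dots> = integral\<^sup>L \<mu> (G z)"
    by (rule Bochner_Integration.integral_cong) (auto simp: A_def C_def G_def algebra_simps)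
  finally show ?thesis .
qed

lemma en_pos: "0 < e \<bullet> n" using a r by linarith

lemma \<sigma>_off_cap:
  assumes "0 \<le> z \<bullet> n" "\<not> norm (z - e) \<le> r"
  shows "\<not> norm (\<sigma> z - e) \<le> r"
proof
  assume h: "norm (\<sigma> z - e) \<le> r"
  have "(norm (\<sigma> z - e))\<^sup>2 = (norm (z - e))\<^sup>2 + 4 * (z \<bullet> n) * (e \<bullet> n)"
    by (rule norm_refl_sq')
  moreover have "0 \<le> 4 * (z \<bullet> n) * (e \<bullet> n)" using assms(1) en_pos by simp
  ultimately have "(norm (z - e))\<^sup>2 \<le> (norm (\<sigma> z - e))\<^sup>2" by simp
  then have "norm (z - e) \<le> norm (\<sigma> z - e)" by (rule power2_le_imp_le) simp
  then show False using h assms(2) by simp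
qed

lemma eq_G:
  assumes z: "z \<in> S" "0 \<le> z \<bullet> n" "\<not> norm (z - e) \<le> r"
  shows "(\<rho> + KK z) * u z = integral\<^sup>L \<mu> (G z)"
  using eq_u[OF z(1,3) \<sigma>_off_cap[OF z(2,3)]] split_G by simp

lemma u_nonneg:
  assumes y: "y \<in> S" "0 < y \<bullet> n"
  shows "0 \<le> u y"
proof (rule ccontr)
  assume neg: "\<not> 0 \<le> u y"
  define A where "A = {z \<in> S. 0 < z \<bullet> n}"
  define m where "m = Inf (u ` A)"
  have yA: "y \<in> A" using y by (simp add: A_def)
  have bdd: "bdd_below (u ` A)"
    by (rule bdd_belowI[where m="-1"]) (use abs_u in \<open>force simp: A_def\<close>)
  have mle: "m \<le> u z" if "z \<in> A" for z
    unfolding m_def using bdd that by (intro cInf_lower) auto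
  have m0: "m < 0" using mle[OF yA] neg by simp
  have key: "m / (1 + \<rho>) \<le> u z" if zA: "z \<in> A" for z
  proof (cases "norm (z - e) \<le> r")
    case True
    have zS: "z \<in> S" using zA by (simp add: A_def)
    then have "v z = 1" using on_M True by simp
    moreover have "v (\<sigma> z) \<le> 1" using v01[of "\<sigma> z"] zS by simp
    ultimately have "0 \<le> u z" by (simp add: u_def)
    moreover have "m / (1 + \<rho>) < 0" using m0 rho by (simp add: divide_neg_pos)
    ultimately show ?thesis by simp
  next
    case False
    have zS: "z \<in> S" and zn: "0 < z \<bullet> n" using zA by (auto simp: A_def)
    have "m * KK z = integral\<^sup>L \<mu> (\<lambda>y. m * (indicator S y * k z y))"
      unfolding KK_def by simp
    also have "\<dots> \<le> integral\<^sup>L \<mu> (G z)"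
    proof (rule integral_mono)
      show "integrable \<mu> (\<lambda>y. m * (indicator S y * k z y))" using intg_Sk by simp
      show "integrable \<mu> (G z)" by (rule intg_G)
      fix w
      show "m * (indicator S w * k z w) \<le> G z w"
      proof (cases "w \<in> A")
        case True
        then have wS: "w \<in> S" and wn: "0 < w \<bullet> n" by (auto simp: A_def)
        have kk: "k z (\<sigma> w) \<le> k z w" using k_refl_le[of z w] zn wn by simp
        have k01: "0 \<le> k z (\<sigma> w)" "k z w \<le> 1" by (simp_all add: ball_kernel_01)
        have um: "m \<le> u w" using mle[OF True] .
        have "m * k z w \<le> m * (k z w - k z (\<sigma> w))"
          using m0 k01 by (simp add: mult_le_cancel_left_neg)
        also have "\<dots> \<le> u w * (k z w - k z (\<sigma> w))"
          using um kk by (intro mult_right_mono) auto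
        finally show ?thesis using wS wn by (simp add: G_def)
      next
        case False
        then show ?thesis
        proof (cases "w \<in> S")
          case True
          with False have "\<not> 0 < w \<bullet> n" by (simp add: A_def)
          then show ?thesis using True m0 ball_kernel_01[of r z w]
            by (simp add: G_def mult_nonpos_nonneg)
        qed (simp add: G_def)
      qed
    qed
    also have "\<dots> = (\<rho> + KK z) * u z"
      using eq_G[OF zS _ False] zn by simp
    finally show ?thesis
      using arith2[of \<rho> "KK z" m "u z"] rho KK_nonneg[of z] KK_le1[of z] m0 by simp
  qed
  have "m / (1 + \<rho>) \<le> m"
    unfolding m_def using yA key by (intro cInf_greatest) (auto simp: m_def)
  moreover have "m < m / (1 + \<rho>)" using m0 rho by (simp add: field_simps mult_pos_neg)
  ultimately show False by simp
qed

lemma u_cap: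
  assumes y: "y \<in> S" "r/2 < y \<bullet> n" "norm (y - e) \<le> r"
  shows "\<rho> / (1 + \<rho>) \<le> u y"
proof -
  have "r/2 * (r/2) < (y \<bullet> n) * (e \<bullet> n)"
    using y(2) a r by (intro mult_strict_mono) auto
  then have "r\<^sup>2 < 4 * (y \<bullet> n) * (e \<bullet> n)"
    by (simp add: power2_eq_square algebra_simps)
  then have "r\<^sup>2 < (norm (y - e))\<^sup>2 + 4 * (y \<bullet> n) * (e \<bullet> n)"
    using zero_le_power2[of "norm (y - e)"] by linarith
  then have "r\<^sup>2 < (norm (\<sigma> y - e))\<^sup>2" by (simp add: norm_refl_sq')
  then have "r < norm (\<sigma> y - e)" using r by (smt (verit) power_mono norm_ge_zero)
  then have "v (\<sigma> y) \<le> 1 / (1 + \<rho>)" using v_small[of "\<sigma> y"] y(1) by simp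
  moreover have "v y = 1" using on_M y by simp
  ultimately show ?thesis using rho by (simp add: u_def field_simps)
qed

definition "F z y = of_bool (y \<in> S \<and> r/2 < y \<bullet> n \<and> norm (z - y) < r) * u y"

lemma F_meas[measurable]: "F z \<in> borel_measurable borel"
  unfolding F_def[abs_def] by measurable

lemma F_nonneg: "0 \<le> F z y"
  using u_nonneg[of y] r by (auto simp: F_def)

lemma intg_F: "integrable \<mu> (F z)"
proof (rule intg[where B=1])
  fix y show "\<bar>F z y\<bar> \<le> 1" using abs_u[of y] by (auto simp: F_def)
qed simp

lemma u_lower:
  assumes z: "z \<in> S" "r/2 < z \<bullet> n" "\<not> norm (z - e) \<le> r"
  shows "integral\<^sup>L \<mu> (F z) \<le> (\<rho> + KK z) * u z"
proof -
  have zn: "0 \<le> z \<bullet> n" using z(2) r by simp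
  have "integral\<^sup>L \<mu> (F z) \<le> integral\<^sup>L \<mu> (G z)"
  proof (rule integral_mono[OF intg_F intg_G])
    fix y
    show "F z y \<le> G z y"
    proof (cases "y \<in> S \<and> r/2 < y \<bullet> n \<and> norm (z - y) < r")
      case True
      have "r/2 * (r/2) < (z \<bullet> n) * (y \<bullet> n)"
        using z(2) True r by (intro mult_strict_mono) auto
      then have "r\<^sup>2 < 4 * (z \<bullet> n) * (y \<bullet> n)"
        by (simp add: power2_eq_square algebra_simps)
      then have "r\<^sup>2 < (norm (z - y))\<^sup>2 + 4 * (z \<bullet> n) * (y \<bullet> n)"
        using zero_le_power2[of "norm (z - y)"] by linarith
      then have "r\<^sup>2 < (norm (z - \<sigma> y))\<^sup>2" by (simp add: norm_refl_sq)
      then have "r < norm (z - \<sigma> y)" using r by (smt (verit) power_mono norm_ge_zero)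
      then have "k z (\<sigma> y) = 0" "k z y = 1" using True by (auto simp: ball_kernel_def)
      then show ?thesis using True r by (simp add: F_def G_def)
    next
      case False
      then have "F z y = 0" by (simp add: F_def)
      moreover have "0 \<le> G z y"
      proof (cases "y \<in> S \<and> 0 < y \<bullet> n")
        case True
        then have "0 \<le> u y" using u_nonneg by simp
        moreover have "k z (\<sigma> y) \<le> k z y" using k_refl_le[of z y] zn True by simp
        ultimately show ?thesis using True by (simp add: G_def)
      qed (auto simp: G_def)
      ultimately show ?thesis by simp
    qed
  qed
  also have "\<dots> = (\<rho> + KK z) * u z" using eq_G[OF z(1) zn z(3)] by simp
  finally show ?thesis .
qed

lemma inner_le_1: "x \<in> S \<Longrightarrow> x \<bullet> e \<le> 1"
  using Cauchy_Schwarz_ineq2[of x e] e by simp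

lemma u_pos:
  assumes x: "x \<in> S" "r/2 < x \<bullet> n" "\<not> norm (x - e) \<le> r"
  shows "0 < u x"
proof (rule ccontr)
  assume nx: "\<not> 0 < u x"
  define Z where "Z = {y. y \<in> S \<and> r/2 < y \<bullet> n \<and> \<not> norm (y - e) \<le> r \<and> u y \<le> 0}"
  define s where "s = Sup ((\<lambda>y. y \<bullet> e) ` Z)"
  define t where "t = r/4"
  define \<kappa> where "\<kappa> = t*r\<^sup>2/(2*(1+t))"
  have \<kappa>: "0 < \<kappa>" using r by (simp add: \<kappa>_def t_def)
  have xZ: "x \<in> Z" using x nx by (simp add: Z_def)
  have bdd: "bdd_above ((\<lambda>y. y \<bullet> e) ` Z)"
    by (rule bdd_aboveI[where M=1]) (auto simp: Z_def inner_le_1)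
  have "s - \<kappa>/2 < s" using \<kappa> by simp
  then obtain y0 where y0Z: "y0 \<in> Z" and y0s: "s - \<kappa>/2 < y0 \<bullet> e"
    using less_cSupD[of "(\<lambda>y. y \<bullet> e) ` Z" "s - \<kappa>/2"] xZ unfolding s_def by auto
  have y0: "y0 \<in> S" "r/2 < y0 \<bullet> n" "\<not> norm (y0 - e) \<le> r" "u y0 \<le> 0"
    using y0Z by (auto simp: Z_def)
  have "0 \<le> u y0" using u_nonneg[of y0] y0 r by simp
  then have u0: "u y0 = 0" using y0(4) by simp
  have "integral\<^sup>L \<mu> (F y0) \<le> 0" using u_lower[OF y0(1-3)] u0 by simp
  moreover have "0 \<le> integral\<^sup>L \<mu> (F y0)"
    by (rule Bochner_Integration.integral_nonneg) (simp add: F_nonneg)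
  ultimately have "integral\<^sup>L \<mu> (F y0) = 0" by simp
  then have AEF: "AE w in \<mu>. F y0 w = 0"
    using integral_nonneg_eq_0_iff_AE[OF intg_F, of y0] F_nonneg by simp
  define N where "N = norm (y0 + t *\<^sub>R e)"
  define p where "p = (1/N) *\<^sub>R (y0 + t *\<^sub>R e)"
  have pp: "norm p = 1" "r/2 < p \<bullet> n" "y0 \<bullet> e + \<kappa> \<le> p \<bullet> e" "norm (p - y0) \<le> r/2"
    using push_point[of y0 e n r] y0 e n r r1 a unfolding p_def N_def \<kappa>_def t_def
    by (auto simp: not_le)
  define \<epsilon> where "\<epsilon> = min (\<kappa>/2) (min (r/2) (p \<bullet> n - r/2))"
  have \<epsilon>: "0 < \<epsilon>" "\<epsilon> \<le> \<kappa>/2" "\<epsilon> \<le> r/2" "\<epsilon> \<le> p \<bullet> n - r/2"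
    using \<kappa> r pp(2) unfolding \<epsilon>_def by (auto simp: min_def)
  define Ob where "Ob = S \<inter> ball p \<epsilon>"
  have Om: "Ob \<in> sets \<mu>" unfolding Ob_def by (simp add: borel_open sets.Int)
  have inO: "w \<in> S \<and> r/2 < w \<bullet> n \<and> norm (y0 - w) < r \<and> y0 \<bullet> e + \<kappa>/2 < w \<bullet> e" if "w \<in> Ob" for w
  proof -
    have wS: "w \<in> S" and wp: "norm (w - p) < \<epsilon>" using that
      by (auto simp: Ob_def dist_norm norm_minus_commute)
    have "\<bar>(w - p) \<bullet> n\<bar> \<le> norm (w - p)" using Cauchy_Schwarz_ineq2[of "w - p" n] n by simp
    then have "r/2 < w \<bullet> n" using wp \<epsilon> by (simp add: inner_diff_left abs_le_iff)
    moreover have "\<bar>(w - p) \<bullet> e\<bar> \<le> norm (w - p)" using Cauchy_Schwarz_ineq2[of "w - p" e] e by simp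
    then have "y0 \<bullet> e + \<kappa>/2 < w \<bullet> e" using wp \<epsilon> pp(3) by (simp add: inner_diff_left abs_le_iff)
    moreover have "norm (y0 - w) < r"
      using norm_triangle_ineq[of "y0 - p" "p - w"] pp(4) wp \<epsilon>
      by (simp add: norm_minus_commute)
    ultimately show ?thesis using wS by simp
  qed
  have "AE w in \<mu>. w \<notin> Ob"
    using AEF
  proof eventually_elim
    case (elim w)
    show "w \<notin> Ob"
    proof
      assume wO: "w \<in> Ob"
      note w = inO[OF wO]
      then have uw: "u w = 0" using elim by (simp add: F_def)
      show False
      proof (cases "norm (w - e) \<le> r")
        case True
        then have "\<rho> / (1 + \<rho>) \<le> u w" using u_cap[of w] w by simp
        then show False using uw rho by (simp add: divide_le_0_iff)
      next
        case False
        then have "w \<in> Z" using w uw by (simp add: Z_def)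
        then have "w \<bullet> e \<le> s" unfolding s_def using bdd by (intro cSup_upper) auto
        then show False using w y0s by simp
      qed
    qed
  qed
  then have "emeasure \<mu> Ob = 0"
    using AE_iff_measurable[OF Om, of "\<lambda>w. w \<notin> Ob"] by simp
  moreover have "emeasure \<mu> Ob > 0" unfolding Ob_def by (rule su_pos[OF pp(1) \<epsilon>(1)])
  ultimately show False by simp
qed

lemma strict:
  assumes x: "x \<in> S" "r/2 < x \<bullet> n" "\<not> norm (x - e) \<le> r"
  shows "v (\<sigma> x) < v x"
  using u_pos[OF x] by (simp add: u_def)

end


lemma unit_dist_sq:
  fixes y e :: "'a::real_inner"
  assumes "norm y = 1" "norm e = 1"
  shows "(norm (y - e))\<^sup>2 = 2 - 2 * (y \<bullet> e)"
proof -
  have "y \<bullet> y = 1" "e \<bullet> e = 1" using assms by (simp_all add: dot_square_norm)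
  then show ?thesis by (simp add: power2_norm_eq_inner inner_diff_left inner_diff_right inner_commute)
qed

lemma cap_inner:
  fixes y e :: "'a::real_inner"
  assumes "norm y = 1" "norm e = 1" "0 < r"
  shows "norm (y - e) \<le> r \<longleftrightarrow> 1 - r\<^sup>2/2 \<le> y \<bullet> e"
proof -
  have "norm (y - e) \<le> r \<longleftrightarrow> (norm (y - e))\<^sup>2 \<le> r\<^sup>2"
  proof
    assume "norm (y - e) \<le> r" then show "(norm (y - e))\<^sup>2 \<le> r\<^sup>2" by (intro power_mono) auto
  next
    assume "(norm (y - e))\<^sup>2 \<le> r\<^sup>2" then show "norm (y - e) \<le> r"
      by (rule power2_le_imp_le) (use assms(3) in simp)
  qed
  then show ?thesis using unit_dist_sq[OF assms(1,2)] by auto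
qed

lemma one_side:
  fixes r \<rho> :: real and w :: "real^'n::finite \<Rightarrow> real" and e :: "real^'n"
  assumes r: "0 < r" and r1: "r < 1" and rho: "0 < \<rho>"
    and meas: "w \<in> borel_measurable (sphere_uniform :: (real^'n) measure)"
    and range: "\<And>x. x \<in> sphere 0 1 \<Longrightarrow> w x \<in> {0..1}"
    and on_M: "\<And>x. x \<in> sphere 0 1 \<Longrightarrow> norm (x - e) \<le> r \<Longrightarrow> w x = 1"
    and off_M: "\<And>x. x \<in> sphere 0 1 \<Longrightarrow> \<not> norm (x - e) \<le> r \<Longrightarrow>
        w x =
          ((LINT y:{y \<in> sphere 0 1. norm (y - e) \<le> r}|sphere_uniform. ball_kernel r x y)
           + (LINT y:(sphere 0 1 - {y \<in> sphere 0 1. norm (y - e) \<le> r})|sphere_uniform.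
                 w y * ball_kernel r x y))
          / (\<rho> + (LINT y:sphere 0 1|sphere_uniform. ball_kernel r x y))"
    and e: "norm e = 1"
    and x: "x \<in> sphere 0 1" "x' \<in> sphere 0 1"
    and dx: "r < norm (x - x')" and de: "r < (x - x') \<bullet> e"
  shows "w x \<noteq> w x'"
proof -
  define d where "d = norm (x - x')"
  have nx: "norm x = 1" "norm x' = 1" using x by auto
  have d: "0 < d" "r < d" "d \<le> 2" using dx r norm_triangle_ineq4[of x x'] nx by (auto simp: d_def)
  define n where "n = (1/d) *\<^sub>R (x - x')"
  have n: "norm n = 1" using d by (simp add: n_def d_def)
  have "r/2 < ((x - x') \<bullet> e) / d"
  proof -
    have "r / 2 \<le> r / d" using d r by (intro divide_left_mono) auto
    also have "\<dots> < ((x - x') \<bullet> e) / d" using de d by (simp add: divide_strict_right_mono)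
    finally show ?thesis .
  qed
  then have a: "e \<bullet> n > r/2" by (simp add: n_def inner_commute)
  interpret rsys r \<rho> w e n
    by unfold_locales (use r r1 rho meas range on_M off_M e n a in auto)
  have xx: "x \<bullet> x' = 1 - d\<^sup>2/2"
    using unit_dist_sq[OF nx] by (simp add: d_def field_simps)
  have xn: "x \<bullet> n = d/2"
  proof -
    have "x \<bullet> n = (1 - x \<bullet> x') / d" using nx by (simp add: n_def inner_diff_right dot_square_norm)
    then show ?thesis using xx d by (simp add: power2_eq_square field_simps)
  qed
  have \<sigma>x: "\<sigma> x = x'"
  proof -
    have "\<sigma> x = x - (2 * (x \<bullet> n)) *\<^sub>R n" by (rule \<sigma>_def)
    also have "2 * (x \<bullet> n) = d" using xn by simp
    also have "x - d *\<^sub>R n = x - d *\<^sub>R ((1/d) *\<^sub>R (x - x'))" by (simp add: n_def)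
    also have "\<dots> = x'" using d by simp
    finally show ?thesis .
  qed
  have xn2: "r/2 < x \<bullet> n" using xn d by simp
  show ?thesis
  proof (cases "norm (x - e) \<le> r")
    case True
    then have wx: "w x = 1" using on_M x by simp
    show ?thesis
    proof (cases "norm (x' - e) \<le> r")
      case True
      then have "1 - r\<^sup>2/2 \<le> x' \<bullet> e" using cap_inner[OF nx(2) e r] by simp
      moreover have "x \<bullet> e \<le> 1" using inner_le_1 x by simp
      ultimately have "(x - x') \<bullet> e \<le> r\<^sup>2/2" by (simp add: inner_diff_left)
      moreover have "r\<^sup>2/2 < r" using r r1 by (simp add: power2_eq_square)
      ultimately show ?thesis using de by simp
    next
      case False
      then have "w x' \<le> 1/(1+\<rho>)" using v_small x by simp
      moreover have "1/(1+\<rho>) < 1" using rho by simp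
      ultimately show ?thesis using wx by simp
    qed
  next
    case False
    show ?thesis
    proof (cases "norm (x' - e) \<le> r")
      case True
      then have "1 - r\<^sup>2/2 \<le> x' \<bullet> e" using cap_inner[OF nx(2) e r] by simp
      moreover have "x \<bullet> e < 1 - r\<^sup>2/2" using False cap_inner[OF nx(1) e r] by simp
      ultimately show ?thesis using de r by (simp add: inner_diff_left)
    next
      case False2: False
      have "w (\<sigma> x) < w x" by (rule strict) (use x xn2 False in auto)
      then show ?thesis using \<sigma>x by simp
    qed
  qed
qed

lemma chord_ge: "0 < r \<Longrightarrow> r < 1 \<Longrightarrow> r \<le> chord_angle r"
proof -
  assume r: "0 < r" "r < 1"
  have "0 \<le> arcsin (r/2)" using arcsin_le_arcsin[of 0 "r/2"] r by simp
  then have "sin (arcsin (r/2)) \<le> arcsin (r/2)" by (rule sin_x_le_x)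
  then show ?thesis using r by (simp add: chord_angle_def)
qed

lemma norm_sq_vec: "(norm (x :: real^'n::finite))\<^sup>2 = (\<Sum>i\<in>UNIV. (x $ i)\<^sup>2)"
  by (simp add: norm_vec_def L2_set_def sum_nonneg)

lemma exists_coord:
  fixes x x' :: "real^'n::finite"
  assumes "0 \<le> c" "c * sqrt (real CARD('n)) < norm (x - x')"
  shows "\<exists>i. c < \<bar>x $ i - x' $ i\<bar>"
proof (rule ccontr)
  assume "\<not> ?thesis"
  then have le: "\<bar>x $ i - x' $ i\<bar> \<le> c" for i by (simp add: not_less)
  have "(norm (x - x'))\<^sup>2 = (\<Sum>i\<in>UNIV. (x $ i - x' $ i)\<^sup>2)" by (simp add: norm_sq_vec)
  also have "\<dots> \<le> (\<Sum>i\<in>(UNIV::'n set). c\<^sup>2)"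
    by (intro sum_mono) (use le assms(1) in \<open>metis abs_ge_zero power2_abs power_mono\<close>)
  also have "\<dots> = (c * sqrt (real CARD('n)))\<^sup>2" by (simp add: power_mult_distrib)
  finally have "norm (x - x') \<le> c * sqrt (real CARD('n))"
    by (rule power2_le_imp_le) (use assms(1) in simp)
  then show False using assms(2) by simp
qed

theorem theorem5:
  fixes r \<rho> :: real
    and v :: "'n::finite \<Rightarrow> real^'n \<Rightarrow> real"
  assumes dim: "CARD('n) \<ge> 2"
    and r: "0 < r" "r < 1"
    and rho: "\<rho> > 0"
    and meas: "\<And>i. v i \<in> borel_measurable (sphere_uniform :: (real^'n) measure)"
    and range: "\<And>i x. x \<in> sphere 0 1 \<Longrightarrow> v i x \<in> {0..1}"
    and on_M: "\<And>i x. x \<in> sphere 0 1 \<Longrightarrow> norm (x - axis i 1) \<le> r \<Longrightarrow> v i x = 1"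
    and off_M: "\<And>i x. x \<in> sphere 0 1 \<Longrightarrow> \<not> norm (x - axis i 1) \<le> r \<Longrightarrow>
        v i x =
          ((LINT y:{y \<in> sphere 0 1. norm (y - axis i 1) \<le> r}|sphere_uniform. ball_kernel r x y)
           + (LINT y:(sphere 0 1 - {y \<in> sphere 0 1. norm (y - axis i 1) \<le> r})|sphere_uniform.
                 v i y * ball_kernel r x y))
          / (\<rho> + (LINT y:sphere 0 1|sphere_uniform. ball_kernel r x y))"
  shows "\<forall>x \<in> sphere 0 1. \<forall>x' \<in> sphere 0 1.
           norm (x - x') > chord_angle r * sqrt (real CARD('n)) \<longrightarrow>
           (\<chi> i. v i x) \<noteq> (\<chi> i. v i x')"
proof (intro ballI impI)
  fix x x' :: "real^'n"
  assume x: "x \<in> sphere 0 1" and x': "x' \<in> sphere 0 1"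
    and d: "chord_angle r * sqrt (real CARD('n)) < norm (x - x')"
  have cr: "r \<le> chord_angle r" by (rule chord_ge[OF r])
  have sq: "1 \<le> sqrt (real CARD('n))" using dim by simp
  have "chord_angle r \<le> chord_angle r * sqrt (real CARD('n))"
    using cr r sq by (simp add: mult_le_cancel_left1)
  then have dr: "r < norm (x - x')" using cr d by linarith
  obtain i where i: "chord_angle r < \<bar>x $ i - x' $ i\<bar>"
    using exists_coord[of "chord_angle r" x x'] d cr r by auto
  have e: "norm (axis i (1::real)) = 1" by simp
  have side: "v i y \<noteq> v i y'"
    if y: "y \<in> sphere 0 1" "y' \<in> sphere 0 1" "r < norm (y - y')" "chord_angle r < y $ i - y' $ i" for y y'
  proof (rule one_side[where e="axis i 1", OF r(1) r(2) rho meas[where i=i] range[where i=i] on_M[where i=i] off_M[where i=i] e y(1) y(2) y(3)])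
    show "r < (y - y') \<bullet> axis i 1" using y(4) cr by (simp add: inner_axis)
  qed
  show "(\<chi> i. v i x) \<noteq> (\<chi> i. v i x')"
  proof
    assume eq: "(\<chi> i. v i x) = (\<chi> i. v i x')"
    then have "v i x = v i x'" by (metis vec_lambda_beta)
    moreover have "v i x \<noteq> v i x'"
    proof (cases "x' $ i < x $ i")
      case True
      then show ?thesis using side[OF x x' dr] i by simp
    next
      case False
      have "r < norm (x' - x)" using dr by (simp add: norm_minus_commute)
      then show ?thesis using side[OF x' x] i False by auto
    qed
    ultimately show False by simp
  qed
qed


end
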